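(* Assume $\rho>\rho_1$. Then there is a homeomorphism $h:\widetilde X\to[0,1]$ such that $h\circ\widetilde f\circ h^{-1}$ is an increasing homeomorphism of $[0,1]$ whose fixed points are $0$ and $1$ (corresponding to $(\omega_0,\omega_0,\dots)$ and $(1,1,\dots)$). In particular $\widetilde X_{T_\infty}=\{(\omega_0,\omega_0,\dots)\}$, where $T_\infty=(0,0,0,\dots)$.
   Context: Standing setup. Fix real numbers $\rho,\delta,\gamma,\alpha$ with $0<\rho<1$, $\delta>0$, $\gamma>-\delta/\rho$, $-\delta/\rho<\alpha<0$. Define $f:[0,1]\to[0,1]$ by $f(x)=f_0(x):=\frac{\alpha x-\alpha\rho}{\gamma x+\delta}$ for $x\in[0,\rho]$ and $f(x)=f_1(x):=\frac{x-\rho}{1-\rho}$ for $x\in(\rho,1]$. Put $\rho_1:=f_0(0)$; $\omega_0$ denotes the fixed point of $f$ in $[0,\rho)$. The inverse limit is $\widetilde X=\{(x_0,x_1,\dots)\in[0,1]^{\mathbb N}: f(x_{n+1})=x_n \ \forall n\}$ with the product topology; the shift is $\widetilde f(x_0,x_1,\dots)=(f(x_0),x_0,x_1,\dots)$. A point $\widetilde x=(x_0,x_1,\dots)$ is of type $T\in\{0,1\}^{\mathbb N}$ if $x_{n+1}\in[0,\rho]$ whenever $T(n)=0$ and $x_{n+1}\in(\rho,1]$ whenever $T(n)=1$; $\widetilde X_T$ is the set of points of type $T$. *)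

theory Defs
  imports "HOL-Analysis.Analysis"
begin

definition fmap :: "real \<Rightarrow> real \<Rightarrow> real \<Rightarrow> real \<Rightarrow> real \<Rightarrow> real" where
  "fmap \<rho> \<delta> \<gamma> \<alpha> x =
     (if x \<le> \<rho> then (\<alpha> * x - \<alpha> * \<rho>) / (\<gamma> * x + \<delta>) else (x - \<rho>) / (1 - \<rho>))"

definition rho1 :: "real \<Rightarrow> real \<Rightarrow> real \<Rightarrow> real \<Rightarrow> real" where
  "rho1 \<rho> \<delta> \<gamma> \<alpha> = (\<alpha> * 0 - \<alpha> * \<rho>) / (\<gamma> * 0 + \<delta>)"

definition omega0 :: "real \<Rightarrow> real \<Rightarrow> real \<Rightarrow> real \<Rightarrow> real" where
  "omega0 \<rho> \<delta> \<gamma> \<alpha> = (THE w. 0 \<le> w \<and> w < \<rho> \<and> fmap \<rho> \<delta> \<gamma> \<alpha> w = w)"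

definition invlim :: "real \<Rightarrow> real \<Rightarrow> real \<Rightarrow> real \<Rightarrow> (nat \<Rightarrow> real) set" where
  "invlim \<rho> \<delta> \<gamma> \<alpha> =
     {x. (\<forall>n. x n \<in> {0..1}) \<and> (\<forall>n. fmap \<rho> \<delta> \<gamma> \<alpha> (x (Suc n)) = x n)}"

definition shift :: "real \<Rightarrow> real \<Rightarrow> real \<Rightarrow> real \<Rightarrow> (nat \<Rightarrow> real) \<Rightarrow> (nat \<Rightarrow> real)" where
  "shift \<rho> \<delta> \<gamma> \<alpha> x = (\<lambda>n. if n = 0 then fmap \<rho> \<delta> \<gamma> \<alpha> (x 0) else x (n - 1))"

definition of_type :: "real \<Rightarrow> (nat \<Rightarrow> nat) \<Rightarrow> (nat \<Rightarrow> real) \<Rightarrow> bool" where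
  "of_type \<rho> T x = (\<forall>n. (T n = 0 \<longrightarrow> x (Suc n) \<in> {0..\<rho>}) \<and> (T n = 1 \<longrightarrow> x (Suc n) \<in> {\<rho><..1}))"

definition invlim_type :: "real \<Rightarrow> real \<Rightarrow> real \<Rightarrow> real \<Rightarrow> (nat \<Rightarrow> nat) \<Rightarrow> (nat \<Rightarrow> real) set" where
  "invlim_type \<rho> \<delta> \<gamma> \<alpha> T = {x \<in> invlim \<rho> \<delta> \<gamma> \<alpha>. of_type \<rho> T x}"

end

theory Submission
  imports Defs
begin

lemma dd: "(c::real) \<noteq> 0 \<Longrightarrow> (x/c)/(y/c) = x/y" by (simp add: divide_divide_times_eq)

locale invsys =
  fixes \<rho> \<delta> \<gamma> \<alpha> :: real
  assumes r0: "0 < \<rho>" and r1: "\<rho> < 1" and d0: "\<delta> > 0" and g0: "\<gamma> > - \<delta> / \<rho>"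
    and a0: "- \<delta> / \<rho> < \<alpha>" and a1: "\<alpha> < 0"
    and rr: "\<rho> > rho1 \<rho> \<delta> \<gamma> \<alpha>"
begin

abbreviation f where "f \<equiv> fmap \<rho> \<delta> \<gamma> \<alpha>"
definition f0 :: "real \<Rightarrow> real" where "f0 x = (\<alpha> * x - \<alpha> * \<rho>) / (\<gamma> * x + \<delta>)"
definition r1v where "r1v = - \<alpha> * \<rho> / \<delta>"

lemma r1v_eq: "rho1 \<rho> \<delta> \<gamma> \<alpha> = r1v" unfolding rho1_def r1v_def by simp

lemma gr: "\<gamma> * \<rho> + \<delta> > 0"
proof -
  have "- \<delta> / \<rho> * \<rho> < \<gamma> * \<rho>" using g0 r0 by (intro mult_strict_right_mono) auto
  thus ?thesis using r0 by simp
qed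

lemma ad: "\<alpha> + \<delta> > 0"
proof -
  have "- \<alpha> * \<rho> / \<delta> < \<rho>" using rr r1v_eq r1v_def by simp
  hence "- \<alpha> * \<rho> < \<rho> * \<delta>" using d0 by (metis divide_less_eq minus_divide_left mult.commute)
  hence "- \<alpha> * \<rho> < \<delta> * \<rho>" by (simp add: mult.commute)
  hence "- \<alpha> < \<delta>" using r0 by (meson mult_less_cancel_right_pos)
  thus ?thesis by simp
qed

lemma r1v_pos: "0 < r1v" and r1v_lt: "r1v < \<rho>"
  using a1 r0 d0 rr r1v_eq by (auto simp: r1v_def divide_pos_pos mult_neg_pos divide_neg_pos)

lemma den_pos: "0 \<le> x \<Longrightarrow> x \<le> \<rho> \<Longrightarrow> \<gamma> * x + \<delta> > 0"
proof (cases "\<gamma> \<ge> 0")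
  case True
  assume "0 \<le> x" thus ?thesis using True d0 by (simp add: add_nonneg_pos)
next
  case False
  assume "x \<le> \<rho>"
  hence "\<gamma> * \<rho> \<le> \<gamma> * x" using False by (simp add: mult_left_mono_neg)
  thus ?thesis using gr by linarith
qed

lemma f_lo: "x \<le> \<rho> \<Longrightarrow> f x = f0 x" by (simp add: fmap_def f0_def)
lemma f_hi: "\<rho> < x \<Longrightarrow> f x = (x - \<rho>) / (1 - \<rho>)" by (simp add: fmap_def)

lemma f0_0: "f0 0 = r1v" unfolding f0_def r1v_def by simp
lemma f0_rho: "f0 \<rho> = 0" unfolding f0_def by simp

lemma f0_anti: assumes "0 \<le> x" "x < y" "y \<le> \<rho>" shows "f0 y < f0 x"
proof -
  have px: "\<gamma> * x + \<delta> > 0" and py: "\<gamma> * y + \<delta> > 0" using den_pos assms by auto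
  have "(\<alpha> * x - \<alpha> * \<rho>) * (\<gamma> * y + \<delta>) - (\<alpha> * y - \<alpha> * \<rho>) * (\<gamma> * x + \<delta>)
        = \<alpha> * (\<delta> + \<gamma> * \<rho>) * (x - y)" by (simp add: algebra_simps)
  also have "\<dots> > 0" using a1 gr assms by (intro mult_neg_neg) (auto intro: mult_neg_pos simp: add.commute)
  finally show ?thesis unfolding f0_def using px py by (simp add: divide_less_eq less_divide_eq mult.commute)
qed

lemma f0_anti_le: "0 \<le> x \<Longrightarrow> x \<le> y \<Longrightarrow> y \<le> \<rho> \<Longrightarrow> f0 y \<le> f0 x"
  using f0_anti by (cases "x = y") (auto intro: less_imp_le)

lemma f0_range: "0 \<le> x \<Longrightarrow> x \<le> \<rho> \<Longrightarrow> 0 \<le> f0 x \<and> f0 x \<le> r1v"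
  using f0_anti_le[of x \<rho>] f0_anti_le[of 0 x] f0_0 f0_rho by auto

lemma f_lo_range: "0 \<le> x \<Longrightarrow> x \<le> \<rho> \<Longrightarrow> 0 \<le> f x \<and> f x \<le> r1v"
  using f0_range f_lo by auto

lemma f_lo_range': "0 \<le> x \<Longrightarrow> x \<le> \<rho> \<Longrightarrow> 0 \<le> f x \<and> f x \<le> \<rho>"
  using f_lo_range r1v_lt by fastforce

lemma f_range: "0 \<le> x \<Longrightarrow> x \<le> 1 \<Longrightarrow> 0 \<le> f x \<and> f x \<le> 1"
proof (cases "x \<le> \<rho>")
  case True
  assume "0 \<le> x" thus ?thesis using f_lo_range' True r1 by fastforce
next
  case False
  assume "x \<le> 1"
  thus ?thesis using False f_hi[of x] r1 by (simp add: divide_le_eq)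
qed

lemma cont_f0: "continuous_on {0..\<rho>} f0"
  unfolding f0_def using den_pos by (intro continuous_intros) (auto, metis less_irrefl)

lemma cont_f: "continuous_on {0..1} f"
proof -
  have c1: "continuous_on {0..\<rho>} f" using cont_f0 by (rule continuous_on_cong[THEN iffD1, rotated 2]) (auto simp: f_lo)
  have "continuous_on {\<rho>..1} (\<lambda>x. (x - \<rho>) / (1 - \<rho>))" using r1 by (intro continuous_intros) auto
  hence c2: "continuous_on {\<rho>..1} f"
    by (rule continuous_on_cong[THEN iffD1, rotated 2])
       (auto simp: fmap_def f0_def)
  have "{0..1} = {0..\<rho>} \<union> {\<rho>..1}" using r0 r1 by auto
  thus ?thesis using continuous_on_closed_Un[OF _ _ c1 c2] by simp
qed

lemma funpow_range: "0 \<le> x \<Longrightarrow> x \<le> 1 \<Longrightarrow> 0 \<le> (f^^m) x \<and> (f^^m) x \<le> 1"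
  by (induction m) (auto simp: f_range)

lemma funpow_range_lo: "0 \<le> x \<Longrightarrow> x \<le> \<rho> \<Longrightarrow> 0 \<le> (f^^m) x \<and> (f^^m) x \<le> \<rho>"
  by (induction m) (auto simp: f_lo_range')

lemma cont_funpow: "continuous_on {0..1} (f^^m)"
proof (induction m)
  case 0 then show ?case by (simp add: continuous_on_id)
next
  case (Suc m)
  have "continuous_on {0..1} (f \<circ> (f^^m))"
    by (rule continuous_on_compose[OF Suc]) (rule continuous_on_subset[OF cont_f], use funpow_range in auto)
  thus ?case by simp
qed

lemma ex_fix: "\<exists>w. 0 \<le> w \<and> w \<le> \<rho> \<and> f0 w = w"
proof -
  have "continuous_on {0..\<rho>} (\<lambda>x. f0 x - x)" using cont_f0 by (intro continuous_intros)
  moreover have "f0 \<rho> - \<rho> \<le> 0" "0 \<le> f0 0 - 0" using f0_rho f0_0 r1v_pos r0 by auto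
  ultimately obtain w where "0 \<le> w" "w \<le> \<rho>" "f0 w - w = 0" using IVT2'[of "\<lambda>x. f0 x - x" \<rho> 0 0] r0 by auto
  thus ?thesis by auto
qed

lemma fix_unique: "0 \<le> x \<Longrightarrow> x \<le> \<rho> \<Longrightarrow> f0 x = x \<Longrightarrow> 0 \<le> y \<Longrightarrow> y \<le> \<rho> \<Longrightarrow> f0 y = y \<Longrightarrow> x = y"
  using f0_anti[of x y] f0_anti[of y x] by (cases x y rule: linorder_cases) auto

definition w0 where "w0 = omega0 \<rho> \<delta> \<gamma> \<alpha>"

lemma w0_props: "0 \<le> w0 \<and> w0 < \<rho> \<and> f w0 = w0 \<and> f0 w0 = w0"
proof -
  obtain w where w: "0 \<le> w" "w \<le> \<rho>" "f0 w = w" using ex_fix by auto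
  have "w \<noteq> \<rho>" using w f0_rho r0 by auto
  with w have w': "0 \<le> w \<and> w < \<rho> \<and> f w = w" using f_lo by auto
  have "omega0 \<rho> \<delta> \<gamma> \<alpha> = w" unfolding omega0_def
  proof (rule the_equality)
    show "0 \<le> w \<and> w < \<rho> \<and> f w = w" by fact
  next
    fix x assume "0 \<le> x \<and> x < \<rho> \<and> f x = x"
    thus "x = w" using fix_unique[of x w] w f_lo by auto
  qed
  thus ?thesis using w' w unfolding w0_def by auto
qed

lemma w0_unique: "0 \<le> x \<Longrightarrow> x \<le> \<rho> \<Longrightarrow> f x = x \<Longrightarrow> x = w0"
  using fix_unique[of x w0] w0_props f_lo by auto

lemma fixed2: assumes "0 \<le> L" "L \<le> \<rho>" "f (f L) = L" shows "L = w0"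
proof -
  define M where "M = f L"
  have M: "0 \<le> M" "M \<le> \<rho>" using f_lo_range' assms M_def by auto
  have e1: "f0 L = M" using M_def f_lo assms by auto
  have e2: "f0 M = L" using assms M f_lo M_def by auto
  have pL: "\<gamma> * L + \<delta> > 0" and pM: "\<gamma> * M + \<delta> > 0" using den_pos assms M by auto
  have q1: "\<alpha> * L - \<alpha> * \<rho> = M * (\<gamma> * L + \<delta>)" using e1 pL unfolding f0_def by (simp add: divide_eq_eq)
  have q2: "\<alpha> * M - \<alpha> * \<rho> = L * (\<gamma> * M + \<delta>)" using e2 pM unfolding f0_def by (simp add: divide_eq_eq)
  have "(\<alpha> + \<delta>) * (L - M) = 0" using q1 q2 by (simp add: algebra_simps)
  hence "L = M" using ad by simp
  thus ?thesis using w0_unique assms M_def by auto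
qed

lemma mono2: "0 \<le> x \<Longrightarrow> x \<le> y \<Longrightarrow> y \<le> \<rho> \<Longrightarrow> (f^^(2*k)) x \<le> (f^^(2*k)) y"
proof (induction k)
  case 0 thus ?case by simp
next
  case (Suc k)
  let ?x = "(f^^(2*k)) x" and ?y = "(f^^(2*k)) y"
  have r1: "0 \<le> ?x" "?x \<le> \<rho>" using funpow_range_lo[of x] Suc.prems by auto
  have r2: "0 \<le> ?y" "?y \<le> \<rho>" using funpow_range_lo[of y] Suc.prems by auto
  have r: "0 \<le> ?x" "?y \<le> \<rho>" "?x \<le> ?y" "?x \<le> \<rho>" "0 \<le> ?y" using r1 r2 Suc by auto
  have "f ?y \<le> f ?x" using f0_anti_le[of ?x ?y] r f_lo by auto
  moreover have "0 \<le> f ?y" "f ?x \<le> \<rho>" using f_lo_range' r by auto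
  ultimately have "f (f ?x) \<le> f (f ?y)" using f0_anti_le[of "f ?y" "f ?x"] f_lo by auto
  moreover have "2 * Suc k = Suc (Suc (2*k))" by simp
  ultimately show ?case by (simp only: funpow.simps o_apply)
qed

lemma funpow2k: "(f^^(2*Suc k)) x = (f^^(2*k)) (f (f x))"
proof -
  have "2 * Suc k = 2*k + 2" by simp
  thus ?thesis by (simp only: funpow_add o_apply) (simp add: numeral_2_eq_2)
qed

lemma lim_lo: "(\<lambda>k. (f^^(2*k)) 0) \<longlonglongrightarrow> w0"
proof -
  let ?a = "\<lambda>k. (f^^(2*k)) 0"
  have wfix: "(f^^(2*k)) w0 = w0" for k using w0_props by (induction k) (auto simp: funpow2k)
  have inc: "incseq ?a"
  proof (rule incseq_SucI)
    fix k
    have "0 \<le> f (f 0)" "f (f 0) \<le> \<rho>" using f_lo_range'[of 0] f_lo_range'[of "f 0"] r0 by auto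
    thus "?a k \<le> ?a (Suc k)" using mono2[of 0 "f (f 0)" k] by (simp only: funpow2k)
  qed
  have bd: "\<forall>k. ?a k \<le> w0" using mono2[of 0 w0] w0_props wfix by (metis less_imp_le order_refl)
  obtain L where L: "?a \<longlonglongrightarrow> L" "\<forall>k. ?a k \<le> L" using incseq_convergent[OF inc bd] by blast
  have L0: "0 \<le> L" using L(2) by (metis funpow_0 mult_0_right)
  have Lw: "L \<le> w0" using L(1) bd by (intro LIMSEQ_le_const2) auto
  have rng: "0 \<le> ?a k \<and> ?a k \<le> \<rho>" for k using funpow_range_lo[of 0] r0 by auto
  have "(\<lambda>k. (f^^2) (?a k)) \<longlonglongrightarrow> (f^^2) L"
    apply (rule continuous_on_tendsto_compose[OF cont_funpow L(1)])
    using L0 Lw w0_props r1 rng r0 by (auto intro!: always_eventually, smt (verit) rng r1)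
  moreover have "(\<lambda>k. (f^^2) (?a k)) = (\<lambda>k. ?a (Suc k))"
  proof
    fix k
    have "2 * Suc k = 2 + 2*k" by simp
    thus "(f^^2) (?a k) = ?a (Suc k)" by (simp only: funpow_add o_apply)
  qed
  ultimately have "(\<lambda>k. ?a (Suc k)) \<longlonglongrightarrow> (f^^2) L" by simp
  hence "?a \<longlonglongrightarrow> (f^^2) L" by (rule LIMSEQ_imp_Suc)
  hence "(f^^2) L = L" using L(1) LIMSEQ_unique by blast
  hence "L = w0" using fixed2[of L] L0 Lw w0_props by (simp add: numeral_2_eq_2)
  thus ?thesis using L by simp
qed

lemma lim_hi: "(\<lambda>k. (f^^(2*k)) \<rho>) \<longlonglongrightarrow> w0"
proof -
  let ?a = "\<lambda>k. (f^^(2*k)) \<rho>"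
  have wfix: "(f^^(2*k)) w0 = w0" for k using w0_props by (induction k) (auto simp: funpow2k)
  have dec: "decseq ?a"
  proof (rule decseq_SucI)
    fix k
    have "0 \<le> f (f \<rho>)" "f (f \<rho>) \<le> \<rho>" using f_lo_range'[of \<rho>] f_lo_range'[of "f \<rho>"] r0 by auto
    thus "?a (Suc k) \<le> ?a k" using mono2[of "f (f \<rho>)" \<rho> k] by (simp only: funpow2k)
  qed
  have bd: "\<forall>k. w0 \<le> ?a k" using mono2[of w0 \<rho>] w0_props wfix by (metis less_imp_le order_refl)
  obtain L where L: "?a \<longlonglongrightarrow> L" "\<forall>k. L \<le> ?a k" using decseq_convergent[OF dec bd] by blast
  have L0: "L \<le> \<rho>" using L(2) by (metis funpow_0 mult_0_right)
  have Lw: "w0 \<le> L" using L(1) bd by (intro LIMSEQ_le_const) auto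
  have rng: "0 \<le> ?a k \<and> ?a k \<le> \<rho>" for k using funpow_range_lo[of \<rho>] r0 by auto
  have "(\<lambda>k. (f^^2) (?a k)) \<longlonglongrightarrow> (f^^2) L"
    apply (rule continuous_on_tendsto_compose[OF cont_funpow L(1)])
    using L0 Lw w0_props r1 rng r0 by (auto intro!: always_eventually, smt (verit) rng r1)
  moreover have "(\<lambda>k. (f^^2) (?a k)) = (\<lambda>k. ?a (Suc k))"
  proof
    fix k
    have "2 * Suc k = 2 + 2*k" by simp
    thus "(f^^2) (?a k) = ?a (Suc k)" by (simp only: funpow_add o_apply)
  qed
  ultimately have "(\<lambda>k. ?a (Suc k)) \<longlonglongrightarrow> (f^^2) L" by simp
  hence "?a \<longlonglongrightarrow> (f^^2) L" by (rule LIMSEQ_imp_Suc)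
  hence "(f^^2) L = L" using L(1) LIMSEQ_unique by blast
  hence "L = w0" using fixed2[of L] L0 Lw w0_props by (simp add: numeral_2_eq_2)
  thus ?thesis using L by simp
qed

lemma conv: assumes "\<epsilon> > 0" shows "\<exists>J. \<forall>y. 0 \<le> y \<and> y \<le> \<rho> \<longrightarrow> \<bar>(f^^J) y - w0\<bar> < \<epsilon>"
proof -
  have "eventually (\<lambda>k. dist ((f^^(2*k)) 0) w0 < \<epsilon>) sequentially"
    using lim_lo assms by (rule tendstoD)
  moreover have "eventually (\<lambda>k. dist ((f^^(2*k)) \<rho>) w0 < \<epsilon>) sequentially"
    using lim_hi assms by (rule tendstoD)
  ultimately obtain K where K: "dist ((f^^(2*K)) 0) w0 < \<epsilon>" "dist ((f^^(2*K)) \<rho>) w0 < \<epsilon>"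
    using eventually_sequentially by (metis (no_types, lifting) eventually_conj_iff order_refl)
  show ?thesis
  proof (intro exI allI impI)
    fix y assume y: "0 \<le> y \<and> y \<le> \<rho>"
    have "(f^^(2*K)) 0 \<le> (f^^(2*K)) y" "(f^^(2*K)) y \<le> (f^^(2*K)) \<rho>" using mono2 y by auto
    thus "\<bar>(f^^(2*K)) y - w0\<bar> < \<epsilon>" using K by (auto simp: dist_real_def)
  qed
qed

abbreviation X where "X \<equiv> invlim \<rho> \<delta> \<gamma> \<alpha>"

lemma inX: "x \<in> X \<Longrightarrow> 0 \<le> x n \<and> x n \<le> 1" and inX_f: "x \<in> X \<Longrightarrow> f (x (Suc n)) = x n"
  unfolding invlim_def by auto

lemma inv_iter: "x \<in> X \<Longrightarrow> x n = (f^^k) (x (n+k))"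
proof (induction k)
  case 0 thus ?case by simp
next
  case (Suc k)
  have "(f^^Suc k) (x (n + Suc k)) = (f^^k) (f (x (Suc (n+k))))" by (simp add: funpow_Suc_right del: funpow.simps)
  also have "\<dots> = (f^^k) (x (n+k))" using inX_f Suc by simp
  finally show ?case using Suc by simp
qed

lemma type0: assumes x: "x \<in> X" and lo: "\<forall>n. x (Suc n) \<le> \<rho>" shows "x = (\<lambda>n. w0)"
proof
  fix n
  have all: "0 \<le> x k \<and> x k \<le> \<rho>" for k
  proof (cases k)
    case 0
    have "0 \<le> x 1" "x 1 \<le> \<rho>" using inX[OF x] lo by (auto simp del: One_nat_def) (metis One_nat_def)
    thus ?thesis using f_lo_range'[of "x 1"] inX_f[OF x, of 0] 0 by auto
  next
    case (Suc m) thus ?thesis using inX[OF x] lo by auto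
  qed
  have "\<bar>x n - w0\<bar> < e" if e: "e > 0" for e
  proof -
    obtain J where J: "\<forall>y. 0 \<le> y \<and> y \<le> \<rho> \<longrightarrow> \<bar>(f^^J) y - w0\<bar> < e" using conv[OF e] by blast
    show ?thesis using J all[of "n+J"] inv_iter[OF x, of n J] by simp
  qed
  hence "\<bar>x n - w0\<bar> = 0" by (metis abs_ge_zero dual_order.irrefl order_le_less)
  thus "x n = w0" by simp
qed

definition Q :: "real \<Rightarrow> nat \<Rightarrow> nat \<Rightarrow> real" where "Q s n m = (f^^m) (1 - (1-\<rho>)^(n+m) * s)"
definition P :: "real \<Rightarrow> nat \<Rightarrow> real" where "P s n = Q s n (LEAST m. (1-\<rho>)^(n+m) * s \<le> 1)"

lemma ex_m: assumes "0 \<le> s" shows "\<exists>m. (1-\<rho>)^(n+m) * s \<le> 1"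
proof -
  obtain k where k: "(1-\<rho>)^k < 1/(s+1)" using real_arch_pow_inv[of "1/(s+1)" "1-\<rho>"] assms r0 by auto
  have "(1-\<rho>)^(n+k) \<le> (1-\<rho>)^k" using r0 r1 by (intro power_decreasing) auto
  hence "(1-\<rho>)^(n+k) * s \<le> (1-\<rho>)^k * s" using assms by (intro mult_right_mono) auto
  also have "\<dots> \<le> 1/(s+1) * s" using k assms by (intro mult_right_mono) auto
  also have "\<dots> \<le> 1" using assms by (simp add: divide_le_eq)
  finally show ?thesis by blast
qed

lemma cond_mono: assumes "(1-\<rho>)^(n+m) * s \<le> 1" "m \<le> m'" "0 \<le> s" shows "(1-\<rho>)^(n+m') * s \<le> 1"
proof -
  have "(1-\<rho>)^(n+m') \<le> (1-\<rho>)^(n+m)" using r0 r1 assms by (intro power_decreasing) auto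
  hence "(1-\<rho>)^(n+m') * s \<le> (1-\<rho>)^(n+m) * s" using assms by (intro mult_right_mono) auto
  thus ?thesis using assms by simp
qed

lemma f_aff: assumes "0 \<le> c" "c \<le> 1" shows "f (1 - (1-\<rho>)*c) = 1 - c"
proof (cases "c = 1")
  case True thus ?thesis using f_lo[of \<rho>] f0_rho by simp
next
  case False
  hence "c < 1" using assms by simp
  hence "(1-\<rho>)*c < (1-\<rho>)*1" using r1 by (intro mult_strict_left_mono) auto
  hence "\<rho> < 1 - (1-\<rho>)*c" by simp
  hence "f (1 - (1-\<rho>)*c) = (1 - (1-\<rho>)*c - \<rho>) / (1-\<rho>)" by (rule f_hi)
  also have "\<dots> = ((1-\<rho>) * (1 - c)) / (1-\<rho>)" by (simp add: algebra_simps)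
  also have "\<dots> = 1 - c" using r1 by simp
  finally show ?thesis .
qed

lemma Q_step: assumes "0 \<le> s" "(1-\<rho>)^(n+m) * s \<le> 1" shows "Q s n (Suc m) = Q s n m"
proof -
  have c: "0 \<le> (1-\<rho>)^(n+m) * s" using assms r1 by simp
  have "Q s n (Suc m) = (f^^m) (f (1 - (1-\<rho>) * ((1-\<rho>)^(n+m) * s)))"
    unfolding Q_def by (simp add: funpow_Suc_right mult.assoc del: funpow.simps)
  also have "\<dots> = Q s n m" unfolding Q_def using f_aff[OF c assms(2)] by simp
  finally show ?thesis .
qed

lemma Q_const: assumes "0 \<le> s" "(1-\<rho>)^(n+m) * s \<le> 1" shows "Q s n (m+k) = Q s n m"
proof (induction k)
  case 0 thus ?case by simp
next
  case (Suc k)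
  have "(1-\<rho>)^(n+(m+k)) * s \<le> 1" using cond_mono[OF assms(2) _ assms(1), of "m+k"] by simp
  thus ?case using Q_step[OF assms(1)] Suc by simp
qed

lemma P_eq: assumes "0 \<le> s" "(1-\<rho>)^(n+m) * s \<le> 1" shows "P s n = Q s n m"
proof -
  define m0 where "m0 = (LEAST m. (1-\<rho>)^(n+m) * s \<le> 1)"
  have c0: "(1-\<rho>)^(n+m0) * s \<le> 1" unfolding m0_def by (rule LeastI_ex) (use ex_m[OF assms(1)] in blast)
  have "m0 \<le> m" unfolding m0_def by (rule Least_le) fact
  hence "Q s n m = Q s n (m0 + (m - m0))" by simp
  also have "\<dots> = Q s n m0" by (rule Q_const[OF assms(1) c0])
  finally show ?thesis unfolding P_def m0_def by simp
qed

lemma Q_range: assumes "0 \<le> s" "(1-\<rho>)^(n+m) * s \<le> 1" shows "0 \<le> Q s n m \<and> Q s n m \<le> 1"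
  unfolding Q_def using assms r1 by (intro funpow_range) auto

lemma P_range: "0 \<le> s \<Longrightarrow> 0 \<le> P s n \<and> P s n \<le> 1"
  using ex_m[of s n] P_eq Q_range by metis

lemma P_f: assumes "0 \<le> s" shows "f (P s (Suc n)) = P s n"
proof -
  obtain m where m: "(1-\<rho>)^(Suc n+m) * s \<le> 1" using ex_m[OF assms] by blast
  have m': "(1-\<rho>)^(n + Suc m) * s \<le> 1" using m by simp
  have "P s n = Q s n (Suc m)" by (rule P_eq[OF assms m'])
  also have "\<dots> = f (Q s (Suc n) m)" unfolding Q_def by simp
  also have "\<dots> = f (P s (Suc n))" using P_eq[OF assms m] by simp
  finally show ?thesis by simp
qed

lemma P_in: "0 \<le> s \<Longrightarrow> P s \<in> X"
  unfolding invlim_def using P_range P_f by auto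

lemma P_tail: "0 \<le> s \<Longrightarrow> (1-\<rho>)^n * s \<le> 1 \<Longrightarrow> P s n = 1 - (1-\<rho>)^n * s"
  using P_eq[of s n 0] unfolding Q_def by simp

lemma P_large: assumes "0 \<le> s" obtains N where "\<And>n. n \<ge> N \<Longrightarrow> P s n = 1 - (1-\<rho>)^n * s"
proof -
  obtain N where N: "(1-\<rho>)^(0+N) * s \<le> 1" using ex_m[OF assms] by blast
  have "P s n = 1 - (1-\<rho>)^n * s" if "n \<ge> N" for n
    using cond_mono[OF N that assms] P_tail[OF assms] by simp
  thus ?thesis using that by blast
qed

lemma P_inj: assumes "0 \<le> s" "0 \<le> s'" "P s = P s'" shows "s = s'"
proof -
  obtain N where N: "\<And>n. n \<ge> N \<Longrightarrow> P s n = 1 - (1-\<rho>)^n * s" using P_large[OF assms(1)] by blast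
  obtain N' where N': "\<And>n. n \<ge> N' \<Longrightarrow> P s' n = 1 - (1-\<rho>)^n * s'" using P_large[OF assms(2)] by blast
  have "(1-\<rho>)^(N+N') * s = (1-\<rho>)^(N+N') * s'" using N[of "N+N'"] N'[of "N+N'"] assms(3) by (smt (verit) le_add1 le_add2)
  moreover have "(1-\<rho>)^(N+N') \<noteq> 0" using r1 by simp
  ultimately show ?thesis using r1 by simp
qed

lemma P_ne: assumes "0 \<le> s" shows "P s \<noteq> (\<lambda>n. w0)"
proof
  assume e: "P s = (\<lambda>n. w0)"
  obtain N where N: "\<And>n. n \<ge> N \<Longrightarrow> P s n = 1 - (1-\<rho>)^n * s" using P_large[OF assms] by blast
  have "(1-\<rho>)^N * s = (1-\<rho>)^(Suc N) * s" using N[of N] N[of "Suc N"] e by (metis le_Suc_eq order_refl diff_left_imp_eq fun_cong)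
  hence "(1-\<rho>)^N * s * \<rho> = 0" by (simp add: algebra_simps)
  hence "s = 0" using r0 r1 by simp
  hence "w0 = 1" using N[of N] e by (metis diff_zero mult_zero_right order_refl)
  thus False using w0_props r1 by simp
qed

lemma P_0: "P 0 = (\<lambda>n. 1)"
  using P_tail[of 0] by auto

lemma P_shift: assumes "0 \<le> s" shows "shift \<rho> \<delta> \<gamma> \<alpha> (P s) = P (s / (1-\<rho>))"
proof
  fix n
  have s': "0 \<le> s / (1-\<rho>)" using assms r1 by simp
  show "shift \<rho> \<delta> \<gamma> \<alpha> (P s) n = P (s / (1-\<rho>)) n"
  proof (cases n)
    case 0
    obtain m where m: "(1-\<rho>)^(0+m) * s \<le> 1" using ex_m[OF assms] by blast
    have m': "(1-\<rho>)^(0 + Suc m) * (s/(1-\<rho>)) \<le> 1" using m r1 by simp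
    have "P (s / (1-\<rho>)) 0 = Q (s/(1-\<rho>)) 0 (Suc m)" by (rule P_eq[OF s' m'])
    also have "\<dots> = f (Q s 0 m)" unfolding Q_def using r1 by simp
    also have "\<dots> = f (P s 0)" using P_eq[OF assms m] by simp
    finally show ?thesis using 0 by (simp add: shift_def)
  next
    case (Suc k)
    obtain m where m: "(1-\<rho>)^(k+m) * s \<le> 1" using ex_m[OF assms] by blast
    have m': "(1-\<rho>)^(Suc k + m) * (s/(1-\<rho>)) \<le> 1" using m r1 by simp
    have "P (s / (1-\<rho>)) (Suc k) = Q (s/(1-\<rho>)) (Suc k) m" by (rule P_eq[OF s' m'])
    also have "\<dots> = Q s k m" unfolding Q_def using r1 by simp
    also have "\<dots> = P s k" using P_eq[OF assms m] by simp
    finally show ?thesis using Suc by (simp add: shift_def)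
  qed
qed

lemma wbar_in: "(\<lambda>n. w0) \<in> X"
  unfolding invlim_def using w0_props r1 by auto

lemma P_surj: assumes x: "x \<in> X" and ne: "x \<noteq> (\<lambda>n. w0)" shows "\<exists>s\<ge>0. x = P s"
proof -
  obtain N where N: "x (Suc N) > \<rho>" using type0[OF x] ne by (meson not_le)
  define M where "M = Suc N"
  have stay: "x (M+k) > \<rho>" for k
  proof (induction k)
    case 0 thus ?case using N M_def by simp
  next
    case (Suc k)
    show ?case
    proof (rule ccontr)
      assume "\<not> \<rho> < x (M + Suc k)"
      hence "x (M + Suc k) \<le> \<rho>" by simp
      hence "f (x (M + Suc k)) \<le> r1v" using f_lo_range inX[OF x] by blast
      hence "x (M+k) \<le> r1v" using inX_f[OF x, of "M+k"] by simp
      thus False using Suc r1v_lt by simp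
    qed
  qed
  have geo: "1 - x (M+k) = (1-\<rho>)^k * (1 - x M)" for k
  proof (induction k)
    case 0 thus ?case by simp
  next
    case (Suc k)
    have "x (M+k) = (x (M + Suc k) - \<rho>) / (1-\<rho>)" using inX_f[OF x, of "M+k"] f_hi[OF stay[of "Suc k"]] by simp
    hence "x (M+k) * (1-\<rho>) = x (M + Suc k) - \<rho>" using r1 by (simp add: field_simps)
    hence "1 - x (M + Suc k) = (1-\<rho>) * (1 - x (M+k))" by (simp add: algebra_simps)
    thus ?case using Suc by simp
  qed
  define s where "s = (1 - x M) / (1-\<rho>)^M"
  have s0: "0 \<le> s" unfolding s_def using inX[OF x] r1 by simp
  have xs: "x (n+M) = 1 - (1-\<rho>)^(n+M) * s" for n
  proof -
    have "x (n+M) = 1 - (1-\<rho>)^n * (1 - x M)" using geo[of n] by (simp add: add.commute)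
    also have "(1-\<rho>)^n * (1 - x M) = (1-\<rho>)^(n+M) * s" unfolding s_def using r1 by (simp add: power_add)
    finally show ?thesis .
  qed
  have "x n = P s n" for n
  proof -
    have c: "(1-\<rho>)^(n+M) * s \<le> 1" using xs[of n] inX[OF x, of "n+M"] by simp
    have "x n = (f^^M) (x (n+M))" by (rule inv_iter[OF x])
    also have "\<dots> = Q s n M" unfolding Q_def xs by simp
    also have "\<dots> = P s n" using P_eq[OF s0 c] by simp
    finally show ?thesis .
  qed
  thus ?thesis using s0 by auto
qed

lemma P_lo: assumes "0 \<le> s" shows "(1-\<rho>)^(k+j) * s \<le> 1 \<Longrightarrow> 1-\<rho> \<le> (1-\<rho>)^k * s \<Longrightarrow> P s k \<le> \<rho>"
proof (induction j arbitrary: k)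
  case 0 thus ?case using P_tail[OF assms, of k] by simp
next
  case (Suc j)
  show ?case
  proof (cases "(1-\<rho>)^k * s \<le> 1")
    case True thus ?thesis using P_tail[OF assms, of k] Suc.prems by simp
  next
    case False
    hence "(1-\<rho>) * 1 \<le> (1-\<rho>) * ((1-\<rho>)^k * s)" using r1 by (intro mult_left_mono) auto
    hence "1-\<rho> \<le> (1-\<rho>)^(Suc k) * s" by (simp add: mult.assoc)
    moreover have "(1-\<rho>)^(Suc k + j) * s \<le> 1" using Suc.prems by simp
    ultimately have "P s (Suc k) \<le> \<rho>" using Suc.IH by blast
    hence "f (P s (Suc k)) \<le> r1v" using f_lo_range P_range[OF assms] by blast
    thus ?thesis using P_f[OF assms] r1v_lt by simp
  qed
qed

definition gg :: "real \<Rightarrow> nat \<Rightarrow> real" where "gg t = (if t = 0 then (\<lambda>n. w0) else P ((1-t)/t))"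
definition F :: "real \<Rightarrow> real" where "F t = (1-\<rho>)*t/(1-\<rho>*t)"

lemma rt_pos: "0 \<le> t \<Longrightarrow> t \<le> 1 \<Longrightarrow> 1 - \<rho>*t > 0"
proof -
  assume "0 \<le> t" "t \<le> 1"
  hence "\<rho>*t \<le> \<rho>*1" using r0 by (intro mult_left_mono) auto
  thus ?thesis using r1 by simp
qed

lemma g_in: "0 \<le> t \<Longrightarrow> t \<le> 1 \<Longrightarrow> gg t \<in> X"
  unfolding gg_def using wbar_in P_in by auto

lemma g_img: "gg ` {0..1} = X"
proof
  show "gg ` {0..1} \<subseteq> X" using g_in by auto
next
  show "X \<subseteq> gg ` {0..1}"
  proof
    fix x assume x: "x \<in> X"
    show "x \<in> gg ` {0..1}"
    proof (cases "x = (\<lambda>n. w0)")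
      case True thus ?thesis by (force simp: gg_def)
    next
      case False
      then obtain s where s: "0 \<le> s" "x = P s" using P_surj[OF x] by blast
      define t where "t = 1/(1+s)"
      have t: "0 < t" "t \<le> 1" unfolding t_def using s by auto
      have "(1-t)/t = s" unfolding t_def using s by (simp add: field_simps)
      hence "gg t = x" unfolding gg_def using t s by simp
      thus ?thesis using t by force
    qed
  qed
qed

lemma g_inj: "inj_on gg {0..1}"
proof
  fix t u assume t: "t \<in> {0..1}" and u: "u \<in> {0..1}" and e: "gg t = gg u"
  show "t = u"
  proof (cases "t = 0"; cases "u = 0")
    assume "t = 0" "u \<noteq> 0" thus ?thesis using e P_ne[of "(1-u)/u"] u unfolding gg_def by auto
  next
    assume "t \<noteq> 0" "u = 0" thus ?thesis using e P_ne[of "(1-t)/t"] t unfolding gg_def by auto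
  next
    assume tu: "t \<noteq> 0" "u \<noteq> 0"
    hence "(1-t)/t = (1-u)/u" using e P_inj[of "(1-t)/t" "(1-u)/u"] t u unfolding gg_def by auto
    hence "1/t - 1 = 1/u - 1" using tu by (simp add: diff_divide_distrib)
    thus ?thesis by simp
  qed simp
qed

lemma F_range: "0 \<le> t \<Longrightarrow> t \<le> 1 \<Longrightarrow> 0 \<le> F t \<and> F t \<le> 1"
proof -
  assume t: "0 \<le> t" "t \<le> 1"
  have p: "1 - \<rho>*t > 0" using rt_pos t by auto
  have "(1-\<rho>)*t \<le> 1 - \<rho>*t" using t by (simp add: algebra_simps)
  thus ?thesis unfolding F_def using p t r1 by (simp add: divide_le_eq)
qed

lemma g_shift: assumes "0 \<le> t" "t \<le> 1" shows "shift \<rho> \<delta> \<gamma> \<alpha> (gg t) = gg (F t)"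
proof (cases "t = 0")
  case True thus ?thesis unfolding gg_def F_def shift_def using w0_props by auto
next
  case False
  hence t: "0 < t" using assms by simp
  have p: "1 - \<rho>*t > 0" using rt_pos assms by auto
  have Fp: "F t \<noteq> 0" unfolding F_def using t p r1 by simp
  have e1: "1 - F t = (1-t)/(1-\<rho>*t)" unfolding F_def using p by (simp add: field_simps)
  have "(1 - F t) / F t = ((1-t)/(1-\<rho>*t)) / ((1-\<rho>)*t/(1-\<rho>*t))" unfolding e1 by (simp add: F_def)
  also have "\<dots> = (1-t) / ((1-\<rho>)*t)" using p by (simp add: dd)
  also have "\<dots> = ((1-t)/t) / (1-\<rho>)" by simp
  finally have "(1 - F t) / F t = ((1-t)/t) / (1-\<rho>)" .
  moreover have "0 \<le> (1-t)/t" using assms t by simp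
  ultimately show ?thesis unfolding gg_def using P_shift False Fp by simp
qed

lemma piece_cont: assumes a: "0 < a" "a \<le> 1" and m: "(1-\<rho>)^(n+m) * ((1-a)/a) \<le> 1"
  shows "continuous_on {a..1} (\<lambda>t. gg t n)"
proof -
  have le: "(1-t)/t \<le> (1-a)/a" if "t \<in> {a..1}" for t
  proof -
    have "1/t \<le> 1/a" using that a by (simp add: frac_le)
    thus ?thesis using that a by (simp add: diff_divide_distrib)
  qed
  have eq: "gg t n = (f^^m) (1 - (1-\<rho>)^(n+m) * ((1-t)/t))" if t: "t \<in> {a..1}" for t
  proof -
    have s0: "0 \<le> (1-t)/t" using t a by auto
    have "(1-\<rho>)^(n+m) * ((1-t)/t) \<le> (1-\<rho>)^(n+m) * ((1-a)/a)" using le[OF t] r1 by (intro mult_left_mono) auto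
    hence "(1-\<rho>)^(n+m) * ((1-t)/t) \<le> 1" using m by simp
    thus ?thesis unfolding gg_def using P_eq[OF s0] t a by (simp add: Q_def)
  qed
  have inner: "continuous_on {a..1} (\<lambda>t. 1 - (1-\<rho>)^(n+m) * ((1-t)/t))"
    using a by (intro continuous_intros) auto
  have img: "(\<lambda>t. 1 - (1-\<rho>)^(n+m) * ((1-t)/t)) ` {a..1} \<subseteq> {0..1}"
  proof
    fix y assume "y \<in> (\<lambda>t. 1 - (1-\<rho>)^(n+m) * ((1-t)/t)) ` {a..1}"
    then obtain t where t: "t \<in> {a..1}" and y: "y = 1 - (1-\<rho>)^(n+m) * ((1-t)/t)" by auto
    have s0: "0 \<le> (1-t)/t" using t a by auto
    have "(1-\<rho>)^(n+m) * ((1-t)/t) \<le> (1-\<rho>)^(n+m) * ((1-a)/a)" using le[OF t] r1 by (intro mult_left_mono) auto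
    moreover have "0 \<le> (1-\<rho>)^(n+m) * ((1-t)/t)" using s0 r1 by (intro mult_nonneg_nonneg) auto
    ultimately show "y \<in> {0..1}" using y m by simp
  qed
  have "continuous_on {a..1} (\<lambda>t. (f^^m) (1 - (1-\<rho>)^(n+m) * ((1-t)/t)))"
    using continuous_on_compose2[OF cont_funpow inner img] by simp
  thus ?thesis using eq continuous_on_cong by (metis (no_types, lifting))
qed

lemma cont_at0: "continuous (at 0 within {0..1}) (\<lambda>t. gg t n)"
  unfolding continuous_within_eps_delta
proof (intro allI impI)
  fix e :: real assume e: "e > 0"
  obtain J where J: "\<forall>y. 0 \<le> y \<and> y \<le> \<rho> \<longrightarrow> \<bar>(f^^J) y - w0\<bar> < e" using conv[OF e] by blast
  define B where "B = (1-\<rho>)/(1-\<rho>)^(n+J)"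
  have B: "B > 0" unfolding B_def using r1 by simp
  define d where "d = 1/(1+B)"
  have d: "d > 0" unfolding d_def using B by simp
  show "\<exists>d>0. \<forall>t\<in>{0..1}. dist t 0 < d \<longrightarrow> dist (gg t n) (gg 0 n) < e"
  proof (intro exI conjI ballI impI)
    show "d > 0" by fact
  next
    fix t :: real assume t: "t \<in> {0..1}" and td: "dist t 0 < d"
    show "dist (gg t n) (gg 0 n) < e"
    proof (cases "t = 0")
      case True thus ?thesis using e by simp
    next
      case False
      hence tp: "t > 0" using t by simp
      define s where "s = (1-t)/t"
      have s0: "0 \<le> s" unfolding s_def using t tp by simp
      have "t < 1/(1+B)" using td tp d_def by simp
      hence "t * (1+B) < 1" using B by (simp add: less_divide_eq)
      hence "B * t < 1 - t" by (simp add: algebra_simps)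
      hence Bs: "B < s" unfolding s_def using tp by (simp add: less_divide_eq)
      have "(1-\<rho>)^(n+J) * B = 1-\<rho>" unfolding B_def using r1 by simp
      moreover have "(1-\<rho>)^(n+J) * B \<le> (1-\<rho>)^(n+J) * s" using Bs r1 by (intro mult_left_mono) auto
      ultimately have c: "1-\<rho> \<le> (1-\<rho>)^(n+J) * s" by simp
      obtain j where j: "(1-\<rho>)^(n+J+j) * s \<le> 1" using ex_m[OF s0] by blast
      have lo: "P s (n+J) \<le> \<rho>" using P_lo[OF s0 j c] .
      have "P s n = (f^^J) (P s (n+J))" using inv_iter[OF P_in[OF s0]] by blast
      hence "\<bar>P s n - w0\<bar> < e" using J lo P_range[OF s0] by simp
      thus ?thesis unfolding gg_def s_def using False by (simp add: dist_real_def)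
    qed
  qed
qed

lemma cont_coord: "continuous_on {0..1} (\<lambda>t. gg t n)"
  unfolding continuous_on_eq_continuous_within
proof
  fix t :: real assume t: "t \<in> {0..1}"
  show "continuous (at t within {0..1}) (\<lambda>t. gg t n)"
  proof (cases "t = 0")
    case True thus ?thesis using cont_at0 by simp
  next
    case False
    hence tp: "0 < t" using t by simp
    define a where "a = t/2"
    have a: "0 < a" "a \<le> 1" using tp t unfolding a_def by auto
    obtain m where m: "(1-\<rho>)^(n+m) * ((1-a)/a) \<le> 1" using ex_m[of "(1-a)/a" n] a by auto
    have "continuous_on {a..1} (\<lambda>t. gg t n)" using piece_cont[OF a m] .
    hence c: "continuous (at t within {a..1}) (\<lambda>t. gg t n)"
      using t a tp unfolding a_def continuous_on_eq_continuous_within by auto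
    have "at t within {0..1} = at t within {a..1}"
      by (rule at_within_nhd[where S="{a<..<2}"]) (use t a tp a_def in auto)
    thus ?thesis using c by (simp add: continuous_within)
  qed
qed

lemma cont_g: "continuous_on {0..1} gg"
  by (rule continuous_on_coordinatewise_then_product) (rule cont_coord)

definition psi :: "real \<Rightarrow> real" where "psi u = u / (1 - \<rho> + \<rho>*u)"

lemma psi_den: "0 \<le> u \<Longrightarrow> 1 - \<rho> + \<rho>*u > 0"
  using r0 r1 by (smt (verit) mult_nonneg_nonneg)

lemma psi_range: "0 \<le> u \<Longrightarrow> u \<le> 1 \<Longrightarrow> 0 \<le> psi u \<and> psi u \<le> 1"
proof -
  assume u: "0 \<le> u" "u \<le> 1"
  have p: "1 - \<rho> + \<rho>*u > 0" using psi_den u by auto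
  have "u * (1-\<rho>) \<le> 1 * (1-\<rho>)" using u r1 by (intro mult_right_mono) auto
  hence "u \<le> 1 - \<rho> + \<rho>*u" by (simp add: algebra_simps)
  thus ?thesis unfolding psi_def using p u by (simp add: divide_le_eq)
qed

lemma psi_F: "0 \<le> t \<Longrightarrow> t \<le> 1 \<Longrightarrow> psi (F t) = t"
proof -
  assume t: "0 \<le> t" "t \<le> 1"
  have p: "1 - \<rho>*t > 0" using rt_pos t by auto
  have "1 - \<rho> + \<rho> * F t = (1-\<rho>)/(1-\<rho>*t)" unfolding F_def using p by (simp add: field_simps)
  hence "psi (F t) = ((1-\<rho>)*t/(1-\<rho>*t)) / ((1-\<rho>)/(1-\<rho>*t))" unfolding psi_def F_def by simp
  also have "\<dots> = t" using p r1 by (simp add: dd)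
  finally show ?thesis .
qed

lemma F_psi: "0 \<le> u \<Longrightarrow> u \<le> 1 \<Longrightarrow> F (psi u) = u"
proof -
  assume u: "0 \<le> u" "u \<le> 1"
  have p: "1 - \<rho> + \<rho>*u > 0" using psi_den u by auto
  have "1 - \<rho> * psi u = (1-\<rho>)/(1 - \<rho> + \<rho>*u)" unfolding psi_def using p by (simp add: field_simps)
  hence "F (psi u) = ((1-\<rho>)*u/(1 - \<rho> + \<rho>*u)) / ((1-\<rho>)/(1 - \<rho> + \<rho>*u))" unfolding psi_def F_def by simp
  also have "\<dots> = u" using p r1 by (simp add: dd)
  finally show ?thesis .
qed

lemma F_mono: assumes "0 \<le> x" "x < y" "y \<le> 1" shows "F x < F y"
proof -
  have hr: "1 - \<rho> * x > 0" and hs: "1 - \<rho> * y > 0" using rt_pos assms by auto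
  have "F x - F y = (1-\<rho>)*(x-y)/((1-\<rho> * x)*(1-\<rho> * y))" unfolding F_def using hr hs by (simp add: field_simps)
  also have "\<dots> < 0" using hr hs r1 assms by (intro divide_neg_pos mult_pos_neg mult_pos_pos) auto
  finally show ?thesis by simp
qed

lemma F_fix: "0 \<le> t \<Longrightarrow> t \<le> 1 \<Longrightarrow> F t = t \<longleftrightarrow> t = 0 \<or> t = 1"
proof -
  assume t: "0 \<le> t" "t \<le> 1"
  have p: "1 - \<rho>*t > 0" using rt_pos t by auto
  have "F t = t \<longleftrightarrow> (1-\<rho>)*t = t * (1-\<rho>*t)" unfolding F_def using p by (simp add: divide_eq_eq)
  also have "\<dots> \<longleftrightarrow> \<rho> * (t * (t - 1)) = 0" by (simp add: algebra_simps)
  also have "\<dots> \<longleftrightarrow> t = 0 \<or> t = 1" using r0 by simp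
  finally show ?thesis .
qed

lemma main:
  shows "(\<exists>h g. homeomorphism X {0..1::real} h g
            \<and> strict_mono_on {0..1} (h \<circ> shift \<rho> \<delta> \<gamma> \<alpha> \<circ> g)
            \<and> (\<exists>\<psi>. homeomorphism {0..1} {0..1} (h \<circ> shift \<rho> \<delta> \<gamma> \<alpha> \<circ> g) \<psi>)
            \<and> {t \<in> {0..1}. (h \<circ> shift \<rho> \<delta> \<gamma> \<alpha> \<circ> g) t = t} = {0, 1}
            \<and> h (\<lambda>n. w0) = 0
            \<and> h (\<lambda>n. 1) = 1)
         \<and> invlim_type \<rho> \<delta> \<gamma> \<alpha> (\<lambda>n. 0) = {\<lambda>n. w0}"
proof
  obtain h where H: "homeomorphism {0..1} X gg h"
    using homeomorphism_compact[OF compact_Icc cont_g g_img g_inj] by blast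
  have H': "homeomorphism X {0..1} h gg" using H homeomorphism_sym by blast
  have hg: "\<And>t. t \<in> {0..1} \<Longrightarrow> h (gg t) = t" using H unfolding homeomorphism_def by auto
  let ?c = "h \<circ> shift \<rho> \<delta> \<gamma> \<alpha> \<circ> gg"
  have cF: "\<And>t. t \<in> {0..1} \<Longrightarrow> ?c t = F t"
  proof -
    fix t :: real assume t: "t \<in> {0..1}"
    have "?c t = h (gg (F t))" using g_shift t by simp
    also have "\<dots> = F t" using hg F_range t by auto
    finally show "?c t = F t" .
  qed
  have cF': "\<And>t. t \<in> {0..1} \<Longrightarrow> h (shift \<rho> \<delta> \<gamma> \<alpha> (gg t)) = F t" using cF by simp
  have sm: "strict_mono_on {0..1} ?c"
    unfolding strict_mono_on_def using cF F_mono by auto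
  have contF: "continuous_on {0..1} F"
    unfolding F_def using rt_pos by (intro continuous_intros) (auto, metis less_irrefl)
  have "continuous_on {0..1} ?c = continuous_on {0..1} F" by (rule continuous_on_cong) (use cF in auto)
  hence contc: "continuous_on {0..1} ?c" using contF by simp
  have contpsi: "continuous_on {0..1} psi"
    unfolding psi_def using psi_den by (intro continuous_intros) (auto, metis less_irrefl)
  have hom: "homeomorphism {0..1} {0..1} ?c psi"
    by (rule homeomorphismI[OF contc contpsi]) (auto simp: cF' F_range psi_range psi_F F_psi)
  have fx: "{t \<in> {0..1}. ?c t = t} = {0, 1}" using cF F_fix by auto
  have h0: "h (\<lambda>n. w0) = 0" using hg[of 0] unfolding gg_def by simp
  have h1: "h (\<lambda>n. 1) = 1" using hg[of 1] P_0 unfolding gg_def by simp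
  show "\<exists>h g. homeomorphism X {0..1::real} h g
            \<and> strict_mono_on {0..1} (h \<circ> shift \<rho> \<delta> \<gamma> \<alpha> \<circ> g)
            \<and> (\<exists>\<psi>. homeomorphism {0..1} {0..1} (h \<circ> shift \<rho> \<delta> \<gamma> \<alpha> \<circ> g) \<psi>)
            \<and> {t \<in> {0..1}. (h \<circ> shift \<rho> \<delta> \<gamma> \<alpha> \<circ> g) t = t} = {0, 1}
            \<and> h (\<lambda>n. w0) = 0
            \<and> h (\<lambda>n. 1) = 1"
    using H' sm hom fx h0 h1 by blast
next
  show "invlim_type \<rho> \<delta> \<gamma> \<alpha> (\<lambda>n. 0) = {\<lambda>n. w0}"
  proof
    show "invlim_type \<rho> \<delta> \<gamma> \<alpha> (\<lambda>n. 0) \<subseteq> {\<lambda>n. w0}"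
      unfolding invlim_type_def of_type_def using type0 by auto
    show "{\<lambda>n. w0} \<subseteq> invlim_type \<rho> \<delta> \<gamma> \<alpha> (\<lambda>n. 0)"
      unfolding invlim_type_def of_type_def using wbar_in w0_props by auto
  qed
qed

end

theorem theorem2:
  fixes \<rho> \<delta> \<gamma> \<alpha> :: real
  assumes "0 < \<rho>" "\<rho> < 1" "\<delta> > 0" "\<gamma> > - \<delta> / \<rho>"
    and "- \<delta> / \<rho> < \<alpha>" "\<alpha> < 0"
    and "\<rho> > rho1 \<rho> \<delta> \<gamma> \<alpha>"
  shows "(\<exists>h g. homeomorphism (invlim \<rho> \<delta> \<gamma> \<alpha>) {0..1::real} h g
            \<and> strict_mono_on {0..1} (h \<circ> shift \<rho> \<delta> \<gamma> \<alpha> \<circ> g)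
            \<and> (\<exists>\<psi>. homeomorphism {0..1} {0..1} (h \<circ> shift \<rho> \<delta> \<gamma> \<alpha> \<circ> g) \<psi>)
            \<and> {t \<in> {0..1}. (h \<circ> shift \<rho> \<delta> \<gamma> \<alpha> \<circ> g) t = t} = {0, 1}
            \<and> h (\<lambda>n. omega0 \<rho> \<delta> \<gamma> \<alpha>) = 0
            \<and> h (\<lambda>n. 1) = 1)
         \<and> invlim_type \<rho> \<delta> \<gamma> \<alpha> (\<lambda>n. 0) = {\<lambda>n. omega0 \<rho> \<delta> \<gamma> \<alpha>}"
proof -
  interpret invsys \<rho> \<delta> \<gamma> \<alpha> using assms by unfold_locales
  show ?thesis using main unfolding w0_def .
qed

end
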